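(* Let $\alpha\in(0,\pi/2)$. Then problem $(\mathcal{P}_\alpha)$ admits a minimizer: there exist $L>0$ and $\theta\in\mathcal{M}_{\alpha,L}$ such that $\frac12\int_0^L\theta'(s)^2\,ds\le \frac12\int_0^{\tilde L}\tilde\theta'(s)^2\,ds$ for every $\tilde L>0$ and every $\tilde\theta\in\mathcal{M}_{\alpha,\tilde L}$.
   Context: For $\alpha\in(0,\pi/2]$ and $L>0$, let $\mathcal{M}_{\alpha,L}$ be the set of $\theta\in H^1(0,L)$ with $\theta'\ge 0$ a.e., $\theta(0)=0$, $\theta(L)=2\alpha$, $\int_0^L\cos\theta(u)\,du=\sin2\alpha$ and $\int_0^L\sin\theta(u)\,du=1-\cos2\alpha$. Such a $\theta$ is the tangent angle (with the horizontal axis) of the convex arc parametrized by arc length $\gamma(s)=(x(s),y(s))$, $x(s)=\int_0^s\cos\theta$, $y(s)=-1+\int_0^s\sin\theta$, which joins $A=(0,-1)$ with tangent $(1,0)$ to $B=(\sin2\alpha,-\cos2\alpha)$ with tangent $(\cos2\alpha,\sin2\alpha)$; its length $L$ is free. Problem $(\mathcal{P}_\alpha)$ is to minimize the elastic energy $\frac12\int_0^L\theta'(s)^2\,ds$ over all $L>0$ and $\theta\in\mathcal{M}_{\alpha,L}$. *)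

theory Defs
  imports "HOL-Analysis.Analysis"
begin

text \<open>H^1(0,L) functions: theta is absolutely continuous on [0,L] with weak derivative g
  in L^2(0,L), i.e. theta s = theta 0 + int_0^s g for all s in [0,L].  The weak derivative g
  is unique almost everywhere, so the energy (1/2) int_0^L g^2 only depends on theta.\<close>
definition H1_with_deriv :: "real \<Rightarrow> (real \<Rightarrow> real) \<Rightarrow> (real \<Rightarrow> real) \<Rightarrow> bool" where
  "H1_with_deriv L \<theta> g \<longleftrightarrow>
     set_integrable lborel {0..L} g \<and>
     set_integrable lborel {0..L} (\<lambda>s. (g s)\<^sup>2) \<and>
     (\<forall>s\<in>{0..L}. \<theta> s = \<theta> 0 + (LINT u:{0..s}|lborel. g u))"

definition admissible :: "real \<Rightarrow> real \<Rightarrow> (real \<Rightarrow> real) \<Rightarrow> (real \<Rightarrow> real) \<Rightarrow> bool" where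
  "admissible \<alpha> L \<theta> g \<longleftrightarrow>
     H1_with_deriv L \<theta> g \<and>
     (AE s in lborel. s \<in> {0..L} \<longrightarrow> g s \<ge> 0) \<and>
     \<theta> 0 = 0 \<and> \<theta> L = 2 * \<alpha> \<and>
     (LINT u:{0..L}|lborel. cos (\<theta> u)) = sin (2 * \<alpha>) \<and>
     (LINT u:{0..L}|lborel. sin (\<theta> u)) = 1 - cos (2 * \<alpha>)"

definition energy :: "real \<Rightarrow> (real \<Rightarrow> real) \<Rightarrow> real" where
  "energy L g = (1/2) * (LINT s:{0..L}|lborel. (g s)\<^sup>2)"

end

theory Submission
  imports Defs
begin


lemma zero_if_le_inv:
  fixes x c :: real
  assumes "\<And>n::nat. n > 0 \<Longrightarrow> \<bar>x\<bar> \<le> c / n"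
  shows "x = 0"
proof (rule ccontr)
  assume "x \<noteq> 0"
  then have xp: "\<bar>x\<bar> > 0" by simp
  obtain n :: nat where n: "n > c / \<bar>x\<bar>" using reals_Archimedean2 by blast
  have "n > 0"
  proof (rule ccontr)
    assume "\<not> n > 0" then have "n = 0" by simp
    then have "c / \<bar>x\<bar> < 0" using n by simp
    moreover have "\<bar>x\<bar> \<le> c / 1" using assms[of 1] by simp
    ultimately show False using xp by (simp add: divide_less_0_iff)
  qed
  then have "\<bar>x\<bar> \<le> c / n" using assms[of n] by simp
  then have "\<bar>x\<bar> * n \<le> c" using \<open>n > 0\<close> by (simp add: field_simps)
  moreover have "c < n * \<bar>x\<bar>" using n xp by (simp add: field_simps)
  ultimately show False by (simp add: mult.commute)
qed

lemma const_from_sq_bound: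
  fixes D V :: "real \<Rightarrow> real" and L C :: real
  assumes L: "0 \<le> L" and C: "0 \<le> C"
    and Vc: "continuous_on {0..L} V"
    and Vm: "\<And>t t'. 0 \<le> t \<Longrightarrow> t \<le> t' \<Longrightarrow> t' \<le> L \<Longrightarrow> V t \<le> V t'"
    and Db: "\<And>t t'. 0 \<le> t \<Longrightarrow> t \<le> t' \<Longrightarrow> t' \<le> L \<Longrightarrow> \<bar>D t' - D t\<bar> \<le> C * (V t' - V t)^2"
  shows "D L = D 0"
proof -
  define \<Delta> where "\<Delta> = V L - V 0"
  have \<Delta>0: "\<Delta> \<ge> 0" using Vm[of 0 L] L by (simp add: \<Delta>_def)
  have main: "\<bar>D L - D 0\<bar> \<le> C * \<Delta>^2 / n" if n: "n > 0" for n :: nat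
  proof -
    have step: "\<exists>t. 0 \<le> t \<and> t \<le> L \<and> V t = V 0 + j * \<Delta> / n \<and> \<bar>D t - D 0\<bar> \<le> C * j * (\<Delta> / n)^2"
      if "j \<le> n" for j
      using that
    proof (induction j)
      case 0
      then show ?case using L by (intro exI[of _ 0]) auto
    next
      case (Suc j)
      then obtain t where t: "0 \<le> t" "t \<le> L" "V t = V 0 + j * \<Delta> / n"
        "\<bar>D t - D 0\<bar> \<le> C * j * (\<Delta> / n)^2" by auto
      have le1: "V t \<le> V 0 + (Suc j) * \<Delta> / n"
        using t(3) \<Delta>0 n by (simp add: field_simps)
      have "(Suc j) * \<Delta> / n \<le> \<Delta>"
      proof -
        have "real (Suc j) * \<Delta> \<le> real n * \<Delta>"
          using Suc.prems \<Delta>0 by (intro mult_right_mono) auto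
        then show ?thesis using n by (simp add: field_simps)
      qed
      then have le2: "V 0 + (Suc j) * \<Delta> / n \<le> V L" by (simp add: \<Delta>_def)
      have "continuous_on {t..L} V" using Vc t(1) continuous_on_subset[of "{0..L}" V "{t..L}"] by auto
      then obtain t' where t': "t \<le> t'" "t' \<le> L" "V t' = V 0 + (Suc j) * \<Delta> / n"
        using IVT'[of V t "V 0 + (Suc j) * \<Delta> / n" L] le1 le2 t(2) by blast
      have "\<bar>D t' - D t\<bar> \<le> C * (V t' - V t)^2" using Db[of t t'] t t' by simp
      also have "V t' - V t = \<Delta> / n" using t(3) t'(3) n by (simp add: field_simps)
      finally have "\<bar>D t' - D 0\<bar> \<le> C * j * (\<Delta> / n)^2 + C * (\<Delta> / n)^2"
        using t(4) by linarith
      also have "\<dots> = C * (Suc j) * (\<Delta> / n)^2" by (simp add: algebra_simps)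
      finally show ?case using t t' by (intro exI[of _ t']) auto
    qed
    obtain t where t: "0 \<le> t" "t \<le> L" "V t = V 0 + n * \<Delta> / n" "\<bar>D t - D 0\<bar> \<le> C * n * (\<Delta> / n)^2"
      using step[of n] by auto
    have "V t = V L" using t(3) n by (simp add: \<Delta>_def)
    then have "\<bar>D L - D t\<bar> \<le> 0" using Db[of t L] t by simp
    then have "\<bar>D L - D 0\<bar> \<le> C * n * (\<Delta> / n)^2" using t(4) by linarith
    also have "\<dots> = C * \<Delta>^2 / n" using n by (simp add: power2_eq_square field_simps)
    finally show ?thesis .
  qed
  show ?thesis using zero_if_le_inv[of "D L - D 0" "C * \<Delta>^2"] main by simp
qed



lemma Q_bound:
  fixes W Q :: "real \<Rightarrow> real"
  assumes Wl: "\<And>x y. \<bar>W x - W y\<bar> \<le> l * \<bar>x - y\<bar>"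
    and Qd: "\<And>x. x \<in> {m..M} \<Longrightarrow> (Q has_real_derivative W x) (at x)"
    and ab: "a \<in> {m..M}" "b \<in> {m..M}"
  shows "\<bar>Q b - Q a - W a * (b - a)\<bar> \<le> l * (b - a)^2"
proof -
  consider "a < b" | "a = b" | "b < a" by linarith
  then show ?thesis
  proof cases
    case 1
    then obtain z where z: "a < z" "z < b" "Q b - Q a = (b - a) * W z"
      using MVT2[of a b Q W] Qd ab by auto
    have e: "Q b - Q a - W a * (b - a) = (b - a) * (W z - W a)" using z(3) by (simp add: algebra_simps)
    have "\<bar>Q b - Q a - W a * (b - a)\<bar> = \<bar>b - a\<bar> * \<bar>W z - W a\<bar>"
      by (simp add: e abs_mult)
    also have "\<dots> \<le> \<bar>b - a\<bar> * (l * \<bar>z - a\<bar>)" using Wl[of z a] by (intro mult_left_mono) auto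
    also have "\<dots> \<le> \<bar>b - a\<bar> * (l * \<bar>b - a\<bar>)"
    proof -
      have "l \<ge> 0" using Wl[of 1 0] by simp
      then show ?thesis using z by (intro mult_left_mono) (auto intro: mult_left_mono)
    qed
    finally show ?thesis by (simp add: power2_eq_square abs_mult_self_eq algebra_simps)
  next
    case 2 then show ?thesis by simp
  next
    case 3
    then obtain z where z: "b < z" "z < a" "Q a - Q b = (a - b) * W z"
      using MVT2[of b a Q W] Qd ab by auto
    have e: "Q b - Q a - W a * (b - a) = (a - b) * (W a - W z)" using z(3) by (simp add: algebra_simps)
    have "\<bar>Q b - Q a - W a * (b - a)\<bar> = \<bar>a - b\<bar> * \<bar>W a - W z\<bar>"
      by (simp add: e abs_mult)
    also have "\<dots> \<le> \<bar>a - b\<bar> * (l * \<bar>a - z\<bar>)" using Wl[of a z] by (intro mult_left_mono) auto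
    also have "\<dots> \<le> \<bar>a - b\<bar> * (l * \<bar>a - b\<bar>)"
    proof -
      have "l \<ge> 0" using Wl[of 1 0] by simp
      then show ?thesis using z by (intro mult_left_mono) (auto intro: mult_left_mono)
    qed
    finally show ?thesis by (simp add: power2_eq_square abs_mult_self_eq algebra_simps)
  qed
qed

lemma lip_cont:
  fixes W :: "real \<Rightarrow> real"
  assumes Wl: "\<And>x y. \<bar>W x - W y\<bar> \<le> l * \<bar>x - y\<bar>"
  shows "continuous_on S W"
proof -
  have l0: "l \<ge> 0" using Wl[of 1 0] by simp
  show ?thesis unfolding continuous_on_iff
  proof (intro ballI allI impI)
    fix x e :: real assume e: "e > 0"
    show "\<exists>d>0. \<forall>x'\<in>S. dist x' x < d \<longrightarrow> dist (W x') (W x) < e"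
    proof (intro exI[of _ "e / (l + 1)"] conjI ballI impI)
      show "e / (l + 1) > 0" using e l0 by simp
      fix x' assume "dist x' x < e / (l + 1)"
      then have "\<bar>x' - x\<bar> * (l + 1) < e" using l0 by (simp add: dist_real_def field_simps)
      moreover have "\<bar>W x' - W x\<bar> \<le> \<bar>x' - x\<bar> * (l + 1)"
        using Wl[of x' x] by (smt (verit) abs_ge_zero mult.commute mult_right_mono)
      ultimately show "dist (W x') (W x) < e" by (simp add: dist_real_def)
    qed
  qed
qed

lemma chain_rule_ac:
  fixes g \<theta> W Q :: "real \<Rightarrow> real" and L l :: real
  assumes L: "0 \<le> L"
    and gi: "g integrable_on {0..L}" and agi: "(\<lambda>x. \<bar>g x\<bar>) integrable_on {0..L}"
    and th: "\<And>s. s \<in> {0..L} \<Longrightarrow> \<theta> s = \<theta> 0 + integral {0..s} g"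
    and Wl: "\<And>x y. \<bar>W x - W y\<bar> \<le> l * \<bar>x - y\<bar>"
    and thr: "\<And>s. s \<in> {0..L} \<Longrightarrow> \<theta> s \<in> {m..M}"
    and Qd: "\<And>x. x \<in> {m..M} \<Longrightarrow> (Q has_real_derivative W x) (at x)"
  shows "((\<lambda>s. W (\<theta> s) * g s) has_integral (Q (\<theta> L) - Q (\<theta> 0))) {0..L}"
proof -
  have l0: "l \<ge> 0" using Wl[of 1 0] by simp
  define V where "V s = integral {0..s} (\<lambda>x. \<bar>g x\<bar>)" for s
  define h where "h s = W (\<theta> s) * g s" for s
  have gsub: "g integrable_on {a..b}" if "0 \<le> a" "b \<le> L" for a b
    using integrable_on_subinterval[OF gi] that by auto
  have agsub: "(\<lambda>x. \<bar>g x\<bar>) integrable_on {a..b}" if "0 \<le> a" "b \<le> L" for a b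
    using integrable_on_subinterval[OF agi] that by auto
  have thc: "continuous_on {0..L} \<theta>"
  proof -
    have "continuous_on {0..L} (\<lambda>s. \<theta> 0 + integral {0..s} g)"
      by (intro continuous_intros indefinite_integral_continuous_1 gi)
    then show ?thesis using th by (metis (no_types, lifting) continuous_on_cong)
  qed
  have Vc: "continuous_on {0..L} V"
    unfolding V_def by (intro indefinite_integral_continuous_1 agi)
  have comb: "integral {0..t'} f - integral {0..t} f = integral {t..t'} f"
    if "0 \<le> t" "t \<le> t'" "t' \<le> L" "f integrable_on {0..L}" for f :: "real \<Rightarrow> real" and t t'
  proof -
    have "f integrable_on {0..t'}" using integrable_on_subinterval[OF that(4)] that by auto
    then show ?thesis using Henstock_Kurzweil_Integration.integral_combine[where a=0 and c=t and b=t' and f=f] that by simp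
  qed
  have Vdiff: "V t' - V t = integral {t..t'} (\<lambda>x. \<bar>g x\<bar>)" if "0 \<le> t" "t \<le> t'" "t' \<le> L" for t t'
    unfolding V_def using comb[OF that agi] .
  have Vm: "V t \<le> V t'" if "0 \<le> t" "t \<le> t'" "t' \<le> L" for t t'
  proof -
    have "0 \<le> integral {t..t'} (\<lambda>x. \<bar>g x\<bar>)"
      by (rule integral_nonneg) (use agsub that in auto)
    then show ?thesis using Vdiff[OF that] by simp
  qed
  have thdiff: "\<theta> t' - \<theta> t = integral {t..t'} g" if "0 \<le> t" "t \<le> t'" "t' \<le> L" for t t'
    using th[of t] th[of t'] comb[OF that gi] that by simp
  have thV: "\<bar>\<theta> t' - \<theta> t\<bar> \<le> V t' - V t" if "0 \<le> t" "t \<le> t'" "t' \<le> L" for t t'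
  proof -
    have "norm (integral {t..t'} g) \<le> integral {t..t'} (\<lambda>x. \<bar>g x\<bar>)"
      by (rule integral_norm_bound_integral) (use gsub agsub that in auto)
    then show ?thesis using thdiff[OF that] Vdiff[OF that] by simp
  qed
  obtain B where B: "\<And>s. s \<in> {0..L} \<Longrightarrow> \<bar>W (\<theta> s)\<bar> \<le> B"
  proof -
    have "compact ((W \<circ> \<theta>) ` {0..L})"
    proof (rule compact_continuous_image)
      have "continuous_on UNIV W" by (rule lip_cont[OF Wl])
      then show "continuous_on {0..L} (W \<circ> \<theta>)"
        using thc continuous_on_compose continuous_on_subset by blast
    qed auto
    then obtain B where "\<forall>y \<in> (W \<circ> \<theta>) ` {0..L}. norm y \<le> B"
      using compact_imp_bounded bounded_iff by metis
    then show ?thesis using that by (metis atLeastAtMost_iff comp_apply image_eqI real_norm_def)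
  qed
  have hint: "h integrable_on {a..b}" if "0 \<le> a" "b \<le> L" for a b
  proof -
    have Wc: "continuous_on UNIV W" by (rule lip_cont[OF Wl])
    have "continuous_on {a..b} (\<lambda>s. W (\<theta> s))"
    proof -
      have "continuous_on {a..b} \<theta>" using thc that continuous_on_subset by (metis atLeastatMost_subset_iff order_refl)
      then show ?thesis using Wc continuous_on_compose2 by blast
    qed
    then have m1: "(\<lambda>s. W (\<theta> s)) \<in> borel_measurable (lebesgue_on {a..b})"
      by (rule continuous_imp_measurable_on_sets_lebesgue) auto
    have m2: "g \<in> borel_measurable (lebesgue_on {a..b})"
      using integrable_imp_measurable gsub[OF that] by blast
    have "h \<in> borel_measurable (lebesgue_on {a..b})"
      unfolding h_def using m1 m2 by measurable
    then have "h absolutely_integrable_on {a..b}"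
    proof (rule measurable_bounded_by_integrable_imp_absolutely_integrable)
      show "(\<lambda>x. B * \<bar>g x\<bar>) integrable_on {a..b}" using agsub[OF that] by (rule integrable_on_mult_right)
      show "norm (h x) \<le> B * \<bar>g x\<bar>" if "x \<in> {a..b}" for x
        unfolding h_def using B[of x] that \<open>0 \<le> a\<close> \<open>b \<le> L\<close>
        by (auto simp: abs_mult intro: mult_right_mono)
    qed auto
    then show ?thesis using absolutely_integrable_on_def by blast
  qed
  define D where "D s = integral {0..s} h - Q (\<theta> s)" for s
  have Db: "\<bar>D t' - D t\<bar> \<le> (2 * l) * (V t' - V t)^2" if t: "0 \<le> t" "t \<le> t'" "t' \<le> L" for t t'
  proof -
    define \<delta> where "\<delta> = V t' - V t"
    have Id: "integral {0..t'} h - integral {0..t} h = integral {t..t'} h"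
      using comb[OF t hint[of 0 L]] L by simp
    have A: "integral {t..t'} h - W (\<theta> t) * (\<theta> t' - \<theta> t) = integral {t..t'} (\<lambda>s. (W (\<theta> s) - W (\<theta> t)) * g s)"
    proof -
      have "integral {t..t'} (\<lambda>s. (W (\<theta> s) - W (\<theta> t)) * g s) = integral {t..t'} (\<lambda>s. h s - W (\<theta> t) * g s)"
        by (simp add: h_def algebra_simps)
      also have "\<dots> = integral {t..t'} h - integral {t..t'} (\<lambda>s. W (\<theta> t) * g s)"
        by (rule integral_diff) (use hint gsub t in \<open>auto intro: integrable_on_mult_right\<close>)
      also have "integral {t..t'} (\<lambda>s. W (\<theta> t) * g s) = W (\<theta> t) * integral {t..t'} g"
        by simp
      finally show ?thesis using thdiff[OF t] by simp
    qed
    have A1: "\<bar>integral {t..t'} (\<lambda>s. (W (\<theta> s) - W (\<theta> t)) * g s)\<bar> \<le> integral {t..t'} (\<lambda>s. (l * \<delta>) * \<bar>g s\<bar>)"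
    proof -
      have "norm (integral {t..t'} (\<lambda>s. (W (\<theta> s) - W (\<theta> t)) * g s)) \<le> integral {t..t'} (\<lambda>s. (l * \<delta>) * \<bar>g s\<bar>)"
      proof (rule integral_norm_bound_integral)
        show "(\<lambda>s. (W (\<theta> s) - W (\<theta> t)) * g s) integrable_on {t..t'}"
          using A integrable_diff[OF hint[of t t'] integrable_on_mult_right[OF gsub[of t t'], of "W (\<theta> t)"]] t
          by (simp add: h_def algebra_simps)
        show "(\<lambda>s. (l * \<delta>) * \<bar>g s\<bar>) integrable_on {t..t'}"
          using agsub[of t t'] t by (auto intro: integrable_on_mult_right)
        show "norm ((W (\<theta> s) - W (\<theta> t)) * g s) \<le> (l * \<delta>) * \<bar>g s\<bar>" if s: "s \<in> {t..t'}" for s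
        proof -
          have "\<bar>W (\<theta> s) - W (\<theta> t)\<bar> \<le> l * \<bar>\<theta> s - \<theta> t\<bar>" by (rule Wl)
          also have "\<bar>\<theta> s - \<theta> t\<bar> \<le> V s - V t" using thV[of t s] s t by auto
          also have "V s - V t \<le> \<delta>" using Vm[of s t'] s t by (auto simp: \<delta>_def)
          finally have "\<bar>W (\<theta> s) - W (\<theta> t)\<bar> \<le> l * \<delta>" using l0 by (simp add: mult_left_mono)
          then show ?thesis by (simp add: abs_mult mult_right_mono)
        qed
      qed
      then show ?thesis by simp
    qed
    have A2: "integral {t..t'} (\<lambda>s. (l * \<delta>) * \<bar>g s\<bar>) = l * \<delta> * \<delta>"
      using Vdiff[OF t] by (simp add: \<delta>_def)
    have Bq: "\<bar>Q (\<theta> t') - Q (\<theta> t) - W (\<theta> t) * (\<theta> t' - \<theta> t)\<bar> \<le> l * (\<theta> t' - \<theta> t)^2"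
      by (rule Q_bound[OF Wl Qd]) (use thr t in auto)
    have "(\<theta> t' - \<theta> t)^2 \<le> \<delta>^2"
    proof -
      have a: "\<bar>\<theta> t' - \<theta> t\<bar> \<le> \<delta>" using thV[OF t] by (simp add: \<delta>_def)
      then have "\<bar>\<theta> t' - \<theta> t\<bar> \<le> \<bar>\<delta>\<bar>" by simp
      then show ?thesis by (simp only: abs_le_square_iff)
    qed
    then have Bq2: "l * (\<theta> t' - \<theta> t)^2 \<le> l * \<delta>^2" using l0 by (simp add: mult_left_mono)
    have "D t' - D t = (integral {t..t'} h - W (\<theta> t) * (\<theta> t' - \<theta> t))
        - (Q (\<theta> t') - Q (\<theta> t) - W (\<theta> t) * (\<theta> t' - \<theta> t))"
      using Id by (simp add: D_def)
    then have "\<bar>D t' - D t\<bar> \<le> l * \<delta> * \<delta> + l * \<delta>^2"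
      using A A1 A2 Bq Bq2 by linarith
    then show ?thesis by (simp add: \<delta>_def power2_eq_square)
  qed
  have "D L = D 0"
    by (rule const_from_sq_bound[OF L _ Vc Vm Db]) (use l0 in auto)
  then have "integral {0..L} h = Q (\<theta> L) - Q (\<theta> 0)" by (simp add: D_def)
  then show ?thesis using hint[of 0 L] unfolding h_def by (simp add: has_integral_iff h_def)
qed



lemma abs_cos_diff_le: "\<bar>cos x - cos y\<bar> \<le> \<bar>x - y\<bar>" for x y :: real
proof -
  have *: "\<bar>cos b - cos a\<bar> \<le> \<bar>b - a\<bar>" if ab: "a < b" for a b :: real
  proof -
    obtain z where z: "a < z" "z < b" "cos b - cos a = (b - a) * (- sin z)"
    proof -
      have "\<exists>z>a. z < b \<and> cos b - cos a = (b - a) * (- sin z)"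
        by (rule MVT2) (use ab in \<open>auto intro: DERIV_cos\<close>)
      then show ?thesis using that by blast
    qed
    have "\<bar>cos b - cos a\<bar> = \<bar>b - a\<bar> * \<bar>sin z\<bar>" using z(3) by (simp add: abs_mult)
    also have "\<dots> \<le> \<bar>b - a\<bar> * 1" by (intro mult_left_mono) auto
    finally show ?thesis by simp
  qed
  consider "x < y" | "x = y" | "y < x" by linarith
  then show ?thesis using *[of x y] *[of y x] by cases (auto simp: abs_minus_commute)
qed

lemma abs_max_diff_le: "\<bar>max p c - max q c\<bar> \<le> \<bar>p - q\<bar>" for p q c :: real
  by (simp add: max_def abs_if)

lemma sqrt_diff_le:
  fixes u v c :: real
  assumes "0 < c" "c \<le> u" "c \<le> v"
  shows "\<bar>sqrt u - sqrt v\<bar> \<le> \<bar>u - v\<bar> / (2 * sqrt c)"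
proof -
  have su: "sqrt c \<le> sqrt u" "sqrt c \<le> sqrt v" using assms by auto
  have pos: "sqrt u + sqrt v > 0" using assms by (smt (verit) real_sqrt_gt_zero)
  have "(sqrt u - sqrt v) * (sqrt u + sqrt v) = u - v"
    using assms by (simp add: algebra_simps)
  then have "\<bar>sqrt u - sqrt v\<bar> * (sqrt u + sqrt v) = \<bar>u - v\<bar>"
    using pos by (metis abs_mult abs_of_pos)
  then have e: "\<bar>sqrt u - sqrt v\<bar> = \<bar>u - v\<bar> / (sqrt u + sqrt v)"
    using pos by (simp add: field_simps)
  have "\<bar>u - v\<bar> / (sqrt u + sqrt v) \<le> \<bar>u - v\<bar> / (2 * sqrt c)"
  proof (rule divide_left_mono)
    show "2 * sqrt c \<le> sqrt u + sqrt v" using su by linarith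
    show "0 < (sqrt u + sqrt v) * (2 * sqrt c)" using pos assms by simp
  qed simp
  then show ?thesis using e by simp
qed

definition wt :: "real \<Rightarrow> real \<Rightarrow> real" where
  "wt a \<phi> = sqrt (max (cos (\<phi> - a)) (cos a))"

lemma wt_lip:
  assumes "0 < cos a"
  shows "\<bar>wt a x - wt a y\<bar> \<le> (1 / (2 * sqrt (cos a))) * \<bar>x - y\<bar>"
proof -
  have "\<bar>wt a x - wt a y\<bar> \<le> \<bar>max (cos (x - a)) (cos a) - max (cos (y - a)) (cos a)\<bar> / (2 * sqrt (cos a))"
    unfolding wt_def by (rule sqrt_diff_le) (use assms in auto)
  also have "\<dots> \<le> \<bar>x - y\<bar> / (2 * sqrt (cos a))"
  proof (rule divide_right_mono)
    have "\<bar>max (cos (x - a)) (cos a) - max (cos (y - a)) (cos a)\<bar> \<le> \<bar>cos (x - a) - cos (y - a)\<bar>"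
      by (rule abs_max_diff_le)
    also have "\<dots> \<le> \<bar>(x - a) - (y - a)\<bar>" by (rule abs_cos_diff_le)
    finally show "\<bar>max (cos (x - a)) (cos a) - max (cos (y - a)) (cos a)\<bar> \<le> \<bar>x - y\<bar>" by simp
  qed (use assms in auto)
  finally show ?thesis by simp
qed

lemma wt_cont: "continuous_on S (wt a)"
  unfolding wt_def by (intro continuous_intros)

lemma wt_ge: "sqrt (cos a) \<le> wt a x"
  unfolding wt_def by simp

lemma wt_sq:
  assumes "0 < a" "a < pi / 2" "x \<in> {0..2*a}"
  shows "max (cos (x - a)) (cos a) = cos (x - a)" "(wt a x)^2 = cos (x - a)" "cos a \<le> cos (x - a)"
proof -
  have "cos a \<le> cos \<bar>x - a\<bar>"
    using assms by (subst cos_mono_le_eq) auto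
  then show c: "cos a \<le> cos (x - a)" by (simp add: cos_abs_real)
  then show m: "max (cos (x - a)) (cos a) = cos (x - a)" by simp
  have "0 \<le> cos a" using assms by (intro cos_ge_zero) auto
  then show "(wt a x)^2 = cos (x - a)" unfolding wt_def m using c by simp
qed

lemma deriv_indef:
  fixes h :: "real \<Rightarrow> real"
  assumes "continuous_on UNIV h" "c < x"
  shows "((\<lambda>t. integral {c..t} h) has_real_derivative h x) (at x)"
proof -
  have "((\<lambda>t. integral {c..t} h) has_real_derivative h x) (at x within {c..x+1})"
    by (rule integral_has_real_derivative) (use assms in \<open>auto intro: continuous_on_subset\<close>)
  moreover have "at x within {c..x+1} = at x" using assms by (intro at_within_Icc_at) auto
  ultimately show ?thesis by simp
qed



definition Qf :: "real \<Rightarrow> real \<Rightarrow> real" where "Qf a \<phi> = integral {-1..\<phi>} (wt a)"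
definition Jc :: "real \<Rightarrow> real" where "Jc a = Qf a (2*a) - Qf a 0"
definition kc :: "real \<Rightarrow> real" where "kc a = Jc a / (2 * sin a)"
definition fS :: "real \<Rightarrow> real \<Rightarrow> real" where "fS a \<psi> = 1 / (kc a * wt a \<psi>)"
definition Sf :: "real \<Rightarrow> real \<Rightarrow> real" where
  "Sf a \<phi> = integral {-1..\<phi>} (fS a) - integral {-1..0} (fS a)"
definition Lc :: "real \<Rightarrow> real" where "Lc a = Sf a (2*a)"
definition Tf :: "real \<Rightarrow> real \<Rightarrow> real" where
  "Tf a y = (THE \<phi>. \<phi> \<in> {-1/2..2*a+1/2} \<and> Sf a \<phi> = y)"

context
  fixes a :: real
  assumes a0: "0 < a" and a1: "a < pi / 2"
begin

lemma cos_a_pos: "0 < cos a" using a0 a1 by (intro cos_gt_zero_pi) auto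
lemma sin_a_pos: "0 < sin a" using a0 a1 by (intro sin_gt_zero) auto

lemma wt_pos: "0 < wt a x"
  using wt_ge[of a x] cos_a_pos by (smt (verit) real_sqrt_gt_zero)

lemma Qd: "-1 < x \<Longrightarrow> (Qf a has_real_derivative wt a x) (at x)"
  unfolding Qf_def by (rule deriv_indef[OF wt_cont])

lemma J_pos: "0 < Jc a"
proof -
  have "Qf a 0 < Qf a (2*a)"
  proof (rule DERIV_pos_imp_increasing[of 0 "2*a" "Qf a"])
    show "0 < 2*a" using a0 by simp
    fix x assume "0 \<le> x" "x \<le> 2*a"
    then show "\<exists>y. (Qf a has_real_derivative y) (at x) \<and> 0 < y"
      using Qd wt_pos by (intro exI[of _ "wt a x"]) auto
  qed
  then show ?thesis by (simp add: Jc_def)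
qed

lemma k_pos: "0 < kc a"
  unfolding kc_def using J_pos sin_a_pos by simp

lemma fS_pos: "0 < fS a x"
  unfolding fS_def using k_pos wt_pos by simp

lemma fS_cont: "continuous_on UNIV (fS a)"
  unfolding fS_def
  by (intro continuous_intros wt_cont) (use k_pos wt_pos in \<open>auto simp: less_imp_neq[symmetric]\<close>)

lemma Sd: "-1 < x \<Longrightarrow> (Sf a has_real_derivative fS a x) (at x)"
  unfolding Sf_def using deriv_indef[OF fS_cont, of "-1" x] by (auto intro: derivative_eq_intros)

lemma S0: "Sf a 0 = 0" by (simp add: Sf_def)

lemma S_strict: "-1 < x \<Longrightarrow> x < y \<Longrightarrow> Sf a x < Sf a y"
proof (rule DERIV_pos_imp_increasing[of x y "Sf a"])
  assume "-1 < x" "x < y"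
  then show "x < y" by simp
  fix z assume "x \<le> z" "z \<le> y"
  then show "\<exists>d. (Sf a has_real_derivative d) (at z) \<and> 0 < d"
    using Sd fS_pos \<open>-1 < x\<close> by (intro exI[of _ "fS a z"]) auto
qed

lemma S_isCont: "-1 < x \<Longrightarrow> isCont (Sf a) x"
  using Sd DERIV_isCont by blast

lemma S_inj: "-1 < x \<Longrightarrow> -1 < y \<Longrightarrow> Sf a x = Sf a y \<Longrightarrow> x = y"
  using S_strict[of x y] S_strict[of y x] by (cases x y rule: linorder_cases) auto

abbreviation "lo \<equiv> Sf a (-1/2)"
abbreviation "hi \<equiv> Sf a (2*a+1/2)"

lemma T_ex:
  assumes "y \<in> {lo..hi}"
  shows "Tf a y \<in> {-1/2..2*a+1/2} \<and> Sf a (Tf a y) = y"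
proof -
  have c: "continuous_on {-1/2..2*a+1/2} (Sf a)"
    using S_isCont by (intro continuous_at_imp_continuous_on) auto
  obtain x where x: "-1/2 \<le> x" "x \<le> 2*a+1/2" "Sf a x = y"
    using IVT'[of "Sf a" "-1/2" y "2*a+1/2"] assms c a0 by auto
  have "\<exists>!\<phi>. \<phi> \<in> {-1/2..2*a+1/2} \<and> Sf a \<phi> = y"
    using x S_inj by (intro ex1I[of _ x]) auto
  then show ?thesis unfolding Tf_def by (rule theI')
qed

lemma T_S: "\<phi> \<in> {-1/2..2*a+1/2} \<Longrightarrow> Tf a (Sf a \<phi>) = \<phi>"
proof -
  assume p: "\<phi> \<in> {-1/2..2*a+1/2}"
  have "Sf a \<phi> \<in> {lo..hi}"
    using p S_strict[of "-1/2" \<phi>] S_strict[of \<phi> "2*a+1/2"] using a0 by (cases "\<phi> = -1/2"; cases "\<phi> = 2*a+1/2") auto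
  then have "Tf a (Sf a \<phi>) \<in> {-1/2..2*a+1/2}" "Sf a (Tf a (Sf a \<phi>)) = Sf a \<phi>" using T_ex by auto
  then show ?thesis using S_inj p by auto
qed

lemma L_pos: "0 < Lc a" unfolding Lc_def using S_strict[of 0 "2*a"] S0 a0 by simp

lemma lo_neg: "lo < 0" using S_strict[of "-1/2" 0] S0 by simp
lemma hi_gt: "Lc a < hi" unfolding Lc_def using S_strict[of "2*a" "2*a+1/2"] a0 by simp

lemma T_range:
  assumes "y \<in> {0..Lc a}"
  shows "Tf a y \<in> {0..2*a}"
proof -
  have y: "y \<in> {lo..hi}" using assms lo_neg hi_gt by auto
  from T_ex[OF y] have t: "Tf a y \<in> {-1/2..2*a+1/2}" "Sf a (Tf a y) = y" by auto
  have "0 \<le> Tf a y"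
  proof (rule ccontr)
    assume "\<not> 0 \<le> Tf a y"
    then have "Sf a (Tf a y) < Sf a 0" using t S_strict[of "Tf a y" 0] by auto
    then show False using t assms S0 by auto
  qed
  moreover have "Tf a y \<le> 2*a"
  proof (rule ccontr)
    assume "\<not> Tf a y \<le> 2*a"
    then have "Sf a (2*a) < Sf a (Tf a y)" using t S_strict[of "2*a" "Tf a y"] a0 by auto
    then show False using t assms by (auto simp: Lc_def)
  qed
  ultimately show ?thesis by auto
qed

lemma T0: "Tf a 0 = 0" using T_S[of 0] S0 a0 by simp
lemma TL: "Tf a (Lc a) = 2*a" using T_S[of "2*a"] a0 by (simp add: Lc_def)

lemma T_deriv:
  assumes "y \<in> {0..Lc a}"
  shows "(Tf a has_real_derivative kc a * wt a (Tf a y)) (at y)"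
proof -
  have r: "Tf a y \<in> {0..2*a}" using T_range[OF assms] .
  have y: "lo < y" "y < hi" using assms lo_neg hi_gt by auto
  have cont: "isCont (Tf a) (Sf a (Tf a y))"
  proof (rule isCont_inverse_function2[where a="-1/2" and b="2*a+1/2" and f="Sf a" and g="Tf a" and x="Tf a y"])
    show "-1/2 < Tf a y" "Tf a y < 2*a+1/2" using r by auto
    show "Tf a (Sf a z) = z" if "-1/2 \<le> z" "z \<le> 2*a+1/2" for z using T_S that by auto
    show "isCont (Sf a) z" if "-1/2 \<le> z" "z \<le> 2*a+1/2" for z using S_isCont that by auto
  qed
  have Sy: "Sf a (Tf a y) = y" using T_ex y by auto
  have "(Tf a has_real_derivative inverse (fS a (Tf a y))) (at y)"
  proof (rule DERIV_inverse_function[where a=lo and b=hi])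
    show "(Sf a has_real_derivative fS a (Tf a y)) (at (Tf a y))" using Sd r by auto
    show "fS a (Tf a y) \<noteq> 0" using fS_pos by (simp add: less_imp_neq[symmetric])
    show "lo < y" "y < hi" using y by auto
    show "Sf a (Tf a z) = z" if "lo < z" "z < hi" for z using T_ex that by auto
    show "isCont (Tf a) y" using cont Sy by simp
  qed
  then show ?thesis by (simp add: fS_def)
qed

lemma T_cont: "continuous_on {0..Lc a} (Tf a)"
  using T_deriv DERIV_isCont continuous_at_imp_continuous_on by blast

end


lemma ftc_lint:
  fixes F f :: "real \<Rightarrow> real"
  assumes "p \<le> q" "\<And>x. x \<in> {p..q} \<Longrightarrow> (F has_real_derivative f x) (at x)"
    and "continuous_on {p..q} f"
  shows "(LINT x:{p..q}|lborel. f x) = F q - F p"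
  unfolding set_lebesgue_integral_def
proof (rule integral_FTC_atLeastAtMost[OF assms(1) _ assms(3)])
  fix x assume "p \<le> x" "x \<le> q"
  then have "(F has_real_derivative f x) (at x)" using assms(2) by auto
  then show "(F has_vector_derivative f x) (at x within {p..q})"
    by (simp add: has_real_derivative_iff_has_vector_derivative has_vector_derivative_at_within)
qed

context
  fixes a :: real
  assumes a0: "0 < a" and a1: "a < pi / 2"
begin

lemma wt_T:
  assumes "s \<in> {0..Lc a}"
  shows "wt a (Tf a s) = sqrt (cos (Tf a s - a))" "(wt a (Tf a s))^2 = cos (Tf a s - a)"
    "0 < cos (Tf a s - a)"
proof -
  have r: "Tf a s \<in> {0..2*a}" using T_range[OF a0 a1 assms] .
  show "wt a (Tf a s) = sqrt (cos (Tf a s - a))" unfolding wt_def using wt_sq[OF a0 a1 r] by simp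
  show "(wt a (Tf a s))^2 = cos (Tf a s - a)" using wt_sq[OF a0 a1 r] by simp
  show "0 < cos (Tf a s - a)" using wt_sq[OF a0 a1 r] cos_a_pos[OF a0 a1] by linarith
qed

lemma dQT:
  assumes "s \<in> {0..Lc a}"
  shows "((\<lambda>s. Qf a (Tf a s)) has_real_derivative kc a * cos (Tf a s - a)) (at s)"
proof -
  have r: "Tf a s \<in> {0..2*a}" using T_range[OF a0 a1 assms] .
  have "((\<lambda>s. Qf a (Tf a s)) has_real_derivative wt a (Tf a s) * (kc a * wt a (Tf a s))) (at s)"
    by (rule DERIV_chain2[OF Qd[OF a0 a1] T_deriv[OF a0 a1 assms]]) (use r in auto)
  moreover have "wt a (Tf a s) * (kc a * wt a (Tf a s)) = kc a * cos (Tf a s - a)"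
    using wt_T(2)[OF assms] by (simp add: power2_eq_square algebra_simps)
  ultimately show ?thesis by simp
qed

lemma dRT:
  assumes "s \<in> {0..Lc a}"
  shows "((\<lambda>s. sqrt (cos (Tf a s - a))) has_real_derivative - (kc a / 2) * sin (Tf a s - a)) (at s)"
proof -
  have c: "0 < cos (Tf a s - a)" using wt_T(3)[OF assms] .
  have d1: "((\<lambda>s. cos (Tf a s - a)) has_real_derivative (- sin (Tf a s - a)) * (kc a * wt a (Tf a s))) (at s)"
    by (rule DERIV_chain2[of cos _ "\<lambda>s. Tf a s - a"]) (auto intro!: derivative_eq_intros T_deriv[OF a0 a1 assms])
  have "((\<lambda>s. sqrt (cos (Tf a s - a))) has_real_derivative
      (inverse (sqrt (cos (Tf a s - a))) / 2) * ((- sin (Tf a s - a)) * (kc a * wt a (Tf a s)))) (at s)"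
    by (rule DERIV_chain2[OF DERIV_real_sqrt[OF c] d1])
  moreover have "(inverse (sqrt (cos (Tf a s - a))) / 2) * ((- sin (Tf a s - a)) * (kc a * wt a (Tf a s)))
      = - (kc a / 2) * sin (Tf a s - a)"
    using wt_T(1)[OF assms] c by (simp add: field_simps)
  ultimately show ?thesis by (rule DERIV_cong)
qed

definition "g0 s = kc a * wt a (Tf a s)"

lemma g0_cont: "continuous_on {0..Lc a} g0"
  unfolding g0_def by (intro continuous_intros continuous_on_compose2[OF wt_cont T_cont[OF a0 a1]]) auto

lemma g0_cont_sub: "s \<in> {0..Lc a} \<Longrightarrow> continuous_on {0..s} g0"
  by (rule continuous_on_subset[OF g0_cont]) auto

lemma T_cont_cos: "continuous_on {0..Lc a} (\<lambda>s. f (Tf a s))" if "continuous_on UNIV f" for f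
  using continuous_on_compose2[OF that T_cont[OF a0 a1]] by auto

lemma min_admissible: "admissible a (Lc a) (Tf a) g0"
proof -
  have i1: "set_integrable lborel {0..Lc a} g0" by (rule borel_integrable_atLeastAtMost'[OF g0_cont])
  have i2: "set_integrable lborel {0..Lc a} (\<lambda>s. (g0 s)^2)"
    by (rule borel_integrable_atLeastAtMost') (intro continuous_intros g0_cont)
  have H: "Tf a s = Tf a 0 + (LINT u:{0..s}|lborel. g0 u)" if s: "s \<in> {0..Lc a}" for s
  proof -
    have "(LINT u:{0..s}|lborel. g0 u) = Tf a s - Tf a 0"
    proof (rule ftc_lint)
      show "0 \<le> s" using s by simp
      show "continuous_on {0..s} g0" using g0_cont_sub s by blast
      fix x assume "x \<in> {0..s}"
      then have "x \<in> {0..Lc a}" using s by auto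
      then show "(Tf a has_real_derivative g0 x) (at x)" unfolding g0_def by (rule T_deriv[OF a0 a1])
    qed
    then show ?thesis by simp
  qed
  have AE: "AE s in lborel. s \<in> {0..Lc a} \<longrightarrow> g0 s \<ge> 0"
    using k_pos[OF a0 a1] wt_pos[OF a0 a1] by (auto simp: g0_def less_imp_le)
  have kJ: "kc a * (2 * sin a) = Jc a" using sin_a_pos[OF a0 a1] by (simp add: kc_def)
  have Lpos: "0 \<le> Lc a" using L_pos[OF a0 a1] by simp
  have Cc: "(LINT u:{0..Lc a}|lborel. cos (Tf a u)) = sin (2 * a)"
  proof -
    define F where "F s = cos a * Qf a (Tf a s) / kc a + sin a * (2 / kc a) * sqrt (cos (Tf a s - a))" for s
    have "(LINT u:{0..Lc a}|lborel. cos (Tf a u)) = F (Lc a) - F 0"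
    proof (rule ftc_lint[OF Lpos])
      fix s assume s: "s \<in> {0..Lc a}"
      have "(F has_real_derivative cos a * (kc a * cos (Tf a s - a)) / kc a + sin a * (2 / kc a) * (- (kc a / 2) * sin (Tf a s - a))) (at s)"
        unfolding F_def by (rule DERIV_add[OF DERIV_cdivide[OF DERIV_cmult[OF dQT[OF s]]] DERIV_cmult[OF dRT[OF s]]])
      moreover have "cos a * (kc a * cos (Tf a s - a)) / kc a + sin a * (2 / kc a) * (- (kc a / 2) * sin (Tf a s - a)) = cos (Tf a s)"
      proof -
        have "cos (Tf a s) = cos ((Tf a s - a) + a)" by simp
        also have "\<dots> = cos (Tf a s - a) * cos a - sin (Tf a s - a) * sin a" by (rule cos_add)
        finally show ?thesis using k_pos[OF a0 a1] by (simp add: field_simps)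
      qed
      ultimately show "(F has_real_derivative cos (Tf a s)) (at s)" by (rule DERIV_cong)
    next
      show "continuous_on {0..Lc a} (\<lambda>u. cos (Tf a u))" by (rule T_cont_cos) (intro continuous_intros)
    qed
    also have "F (Lc a) - F 0 = cos a * Jc a / kc a"
      unfolding F_def TL[OF a0 a1] T0[OF a0 a1] Jc_def using k_pos[OF a0 a1] by (simp add: field_simps)
    also have "\<dots> = sin (2 * a)"
    proof -
      have "cos a * Jc a / kc a = cos a * (kc a * (2 * sin a)) / kc a" by (simp only: kJ)
      also have "\<dots> = 2 * sin a * cos a" using k_pos[OF a0 a1] by simp
      finally show ?thesis by (simp only: sin_double)
    qed
    finally show ?thesis .
  qed
  have Ss: "(LINT u:{0..Lc a}|lborel. sin (Tf a u)) = 1 - cos (2 * a)"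
  proof -
    define F where "F s = sin a * Qf a (Tf a s) / kc a - cos a * (2 / kc a) * sqrt (cos (Tf a s - a))" for s
    have "(LINT u:{0..Lc a}|lborel. sin (Tf a u)) = F (Lc a) - F 0"
    proof (rule ftc_lint[OF Lpos])
      fix s assume s: "s \<in> {0..Lc a}"
      have "(F has_real_derivative sin a * (kc a * cos (Tf a s - a)) / kc a - cos a * (2 / kc a) * (- (kc a / 2) * sin (Tf a s - a))) (at s)"
        unfolding F_def by (rule DERIV_diff[OF DERIV_cdivide[OF DERIV_cmult[OF dQT[OF s]]] DERIV_cmult[OF dRT[OF s]]])
      moreover have "sin a * (kc a * cos (Tf a s - a)) / kc a - cos a * (2 / kc a) * (- (kc a / 2) * sin (Tf a s - a)) = sin (Tf a s)"
      proof -
        have "sin (Tf a s) = sin ((Tf a s - a) + a)" by simp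
        also have "\<dots> = sin (Tf a s - a) * cos a + cos (Tf a s - a) * sin a" by (rule sin_add)
        finally show ?thesis using k_pos[OF a0 a1] by (simp add: field_simps)
      qed
      ultimately show "(F has_real_derivative sin (Tf a s)) (at s)" by (rule DERIV_cong)
    next
      show "continuous_on {0..Lc a} (\<lambda>u. sin (Tf a u))" by (rule T_cont_cos) (intro continuous_intros)
    qed
    also have "F (Lc a) - F 0 = sin a * Jc a / kc a"
      unfolding F_def TL[OF a0 a1] T0[OF a0 a1] Jc_def using k_pos[OF a0 a1] by (simp add: field_simps)
    also have "\<dots> = 1 - cos (2 * a)"
    proof -
      have "sin a * Jc a / kc a = sin a * (kc a * (2 * sin a)) / kc a" by (simp only: kJ)
      also have "\<dots> = 2 * (sin a)^2" using k_pos[OF a0 a1] by (simp add: power2_eq_square)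
      finally show ?thesis by (simp add: cos_double_sin)
    qed
    finally show ?thesis .
  qed
  show ?thesis unfolding admissible_def H1_with_deriv_def
    using i1 i2 H AE T0[OF a0 a1] TL[OF a0 a1] Cc Ss by auto
qed

lemma min_energy: "energy (Lc a) g0 = kc a * Jc a / 2"
proof -
  have Lpos: "0 \<le> Lc a" using L_pos[OF a0 a1] by simp
  have "(LINT s:{0..Lc a}|lborel. (g0 s)^2) = kc a * Qf a (Tf a (Lc a)) - kc a * Qf a (Tf a 0)"
  proof (rule ftc_lint[OF Lpos])
    fix s assume s: "s \<in> {0..Lc a}"
    have "((\<lambda>s. kc a * Qf a (Tf a s)) has_real_derivative kc a * (kc a * cos (Tf a s - a))) (at s)"
      by (rule DERIV_cmult[OF dQT[OF s]])
    moreover have "kc a * (kc a * cos (Tf a s - a)) = (g0 s)^2"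
      using wt_T(2)[OF s] by (simp add: g0_def power2_eq_square algebra_simps)
    ultimately show "((\<lambda>s. kc a * Qf a (Tf a s)) has_real_derivative (g0 s)^2) (at s)" by (rule DERIV_cong)
  qed (intro continuous_intros g0_cont)
  then show ?thesis unfolding energy_def TL[OF a0 a1] T0[OF a0 a1] Jc_def by (simp add: algebra_simps)
qed

end


context
  fixes a :: real
  assumes a0: "0 < a" and a1: "a < pi / 2"
begin

lemma lower_bound:
  assumes Lp: "0 < L" and adm: "admissible a L \<theta> g"
  shows "kc a * Jc a / 2 \<le> energy L g"
proof -
  have si: "set_integrable lborel {0..L} g" and si2: "set_integrable lborel {0..L} (\<lambda>s. (g s)^2)"
    and Hs: "\<And>s. s \<in> {0..L} \<Longrightarrow> \<theta> s = \<theta> 0 + (LINT u:{0..s}|lborel. g u)"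
    and AEg: "AE s in lborel. s \<in> {0..L} \<longrightarrow> g s \<ge> 0"
    and th0: "\<theta> 0 = 0" and thL: "\<theta> L = 2 * a"
    and Ic: "(LINT u:{0..L}|lborel. cos (\<theta> u)) = sin (2 * a)"
    and Is: "(LINT u:{0..L}|lborel. sin (\<theta> u)) = 1 - cos (2 * a)"
    using adm unfolding admissible_def H1_with_deriv_def by auto
  have L0: "0 \<le> L" using Lp by simp
  have gi: "g integrable_on {0..L}" using set_borel_integral_eq_integral(1)[OF si] .
  have agi: "(\<lambda>x. \<bar>g x\<bar>) integrable_on {0..L}"
    using set_borel_integral_eq_integral(1)[OF set_integrable_abs[OF si]] .
  have g2i: "(\<lambda>s. (g s)^2) integrable_on {0..L}" using set_borel_integral_eq_integral(1)[OF si2] .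
  have siab: "set_integrable lborel {p..q} g" if "0 \<le> p" "q \<le> L" for p q
    by (rule set_integrable_subset[OF si]) (use that in auto)
  have th: "\<theta> s = \<theta> 0 + integral {0..s} g" if "s \<in> {0..L}" for s
    using Hs[OF that] set_borel_integral_eq_integral(2)[OF siab[of 0 s]] that by auto
  have nonneg: "0 \<le> integral {p..q} g" if "0 \<le> p" "q \<le> L" for p q
  proof -
    have "0 \<le> (LINT x:{p..q}|lborel. g x)"
      unfolding set_lebesgue_integral_def
    proof (rule integral_nonneg_AE)
      show "AE x in lborel. 0 \<le> indicator {p..q} x *\<^sub>R g x"
        using AEg by eventually_elim (use that in \<open>auto simp: indicator_def\<close>)
    qed
    then show ?thesis using set_borel_integral_eq_integral(2)[OF siab[OF that]] by simp
  qed
  have thr: "\<theta> s \<in> {0..2*a}" if s: "s \<in> {0..L}" for s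
  proof -
    have "0 \<le> \<theta> s" using th[OF s] th0 nonneg[of 0 s] s by auto
    moreover have "integral {0..s} g + integral {s..L} g = integral {0..L} g"
      by (rule Henstock_Kurzweil_Integration.integral_combine) (use s gi in auto)
    then have "\<theta> L - \<theta> s = integral {s..L} g" using th[OF s] th[of L] L0 by auto
    then have "\<theta> s \<le> \<theta> L" using nonneg[of s L] s by auto
    ultimately show ?thesis using thL by auto
  qed
  have thc: "continuous_on {0..L} \<theta>"
  proof -
    have "continuous_on {0..L} (\<lambda>s. \<theta> 0 + integral {0..s} g)"
      by (intro continuous_intros indefinite_integral_continuous_1 gi)
    then show ?thesis using th by (metis (no_types, lifting) continuous_on_cong)
  qed
  have ccont: "continuous_on {0..L} (\<lambda>s. f (\<theta> s))" if "continuous_on UNIV f" for f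
    using continuous_on_compose2[OF that thc] by auto
  have cosi: "(\<lambda>s. cos (\<theta> s)) integrable_on {0..L}" "integral {0..L} (\<lambda>s. cos (\<theta> s)) = sin (2*a)"
    using set_borel_integral_eq_integral[OF borel_integrable_atLeastAtMost'[OF ccont[of cos, OF continuous_on_cos[OF continuous_on_id]]]] Ic
    by auto
  have sini: "(\<lambda>s. sin (\<theta> s)) integrable_on {0..L}" "integral {0..L} (\<lambda>s. sin (\<theta> s)) = 1 - cos (2*a)"
    using set_borel_integral_eq_integral[OF borel_integrable_atLeastAtMost'[OF ccont[of sin, OF continuous_on_sin[OF continuous_on_id]]]] Is
    by auto
  have ch: "((\<lambda>s. wt a (\<theta> s) * g s) has_integral (Qf a (\<theta> L) - Qf a (\<theta> 0))) {0..L}"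
  proof (rule chain_rule_ac[OF L0 gi agi th])
    show "\<bar>wt a x - wt a y\<bar> \<le> (1 / (2 * sqrt (cos a))) * \<bar>x - y\<bar>" for x y
      by (rule wt_lip[OF cos_a_pos[OF a0 a1]])
    show "\<theta> s \<in> {0..2*a}" if "s \<in> {0..L}" for s using thr[OF that] .
    show "(Qf a has_real_derivative wt a x) (at x)" if "x \<in> {0..2*a}" for x
      using Qd[OF a0 a1, of x] that by auto
  qed auto
  then have chi: "(\<lambda>s. wt a (\<theta> s) * g s) integrable_on {0..L}"
     and chv: "integral {0..L} (\<lambda>s. wt a (\<theta> s) * g s) = Jc a"
    using th0 thL by (auto simp: Jc_def integrable_on_def integral_unique)
  define k where "k = kc a"
  have kJ: "k * (2 * sin a) = Jc a" using sin_a_pos[OF a0 a1] by (simp add: k_def kc_def)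
  define lhs where "lhs s = 2 * k * (wt a (\<theta> s) * g s) - k^2 * (cos a * cos (\<theta> s) + sin a * sin (\<theta> s))" for s
  have lhsi: "lhs integrable_on {0..L}"
    unfolding lhs_def
    by (intro integrable_diff integrable_on_mult_right integrable_add chi cosi(1) sini(1))
  have lhsv: "integral {0..L} lhs = 2 * k * Jc a - k^2 * (cos a * sin (2*a) + sin a * (1 - cos (2*a)))"
  proof -
    have "integral {0..L} lhs = integral {0..L} (\<lambda>s. 2 * k * (wt a (\<theta> s) * g s))
        - integral {0..L} (\<lambda>s. k^2 * (cos a * cos (\<theta> s) + sin a * sin (\<theta> s)))"
      unfolding lhs_def
      by (rule integral_diff) (intro integrable_on_mult_right integrable_add chi cosi(1) sini(1))+
    also have "integral {0..L} (\<lambda>s. 2 * k * (wt a (\<theta> s) * g s)) = 2 * k * Jc a"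
      using chv by (simp only: integral_mult_right)
    also have "integral {0..L} (\<lambda>s. k^2 * (cos a * cos (\<theta> s) + sin a * sin (\<theta> s)))
        = k^2 * (cos a * sin (2*a) + sin a * (1 - cos (2*a)))"
    proof -
      have "integral {0..L} (\<lambda>s. cos a * cos (\<theta> s) + sin a * sin (\<theta> s))
          = integral {0..L} (\<lambda>s. cos a * cos (\<theta> s)) + integral {0..L} (\<lambda>s. sin a * sin (\<theta> s))"
        by (rule integral_add) (intro integrable_on_mult_right cosi(1) sini(1))+
      also have "\<dots> = cos a * sin (2*a) + sin a * (1 - cos (2*a))"
        using cosi(2) sini(2) by (simp only: integral_mult_right)
      finally show ?thesis by (simp only: integral_mult_right)
    qed
    finally show ?thesis .
  qed
  have trig: "cos a * sin (2*a) + sin a * (1 - cos (2*a)) = 2 * sin a"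
  proof -
    have "cos a * sin (2*a) + sin a * (1 - cos (2*a)) = cos a * (2 * sin a * cos a) + sin a * (2 * (sin a)^2)"
      by (simp add: sin_double cos_double_sin)
    also have "\<dots> = 2 * sin a * ((sin a)^2 + (cos a)^2)" by (simp only: power2_eq_square, algebra)
    also have "\<dots> = 2 * sin a" by (simp only: sin_cos_squared_add mult_1_right)
    finally show ?thesis .
  qed
  have lhsv2: "integral {0..L} lhs = k * Jc a"
    using lhsv trig kJ by (simp add: power2_eq_square algebra_simps)
  have pw: "lhs s \<le> (g s)^2" if s: "s \<in> {0..L}" for s
  proof -
    have r: "\<theta> s \<in> {0..2*a}" using thr[OF s] .
    have "(wt a (\<theta> s))^2 = cos (\<theta> s - a)" using wt_sq[OF a0 a1 r] by simp
    also have "\<dots> = cos a * cos (\<theta> s) + sin a * sin (\<theta> s)" by (simp add: cos_diff algebra_simps)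
    finally have w2: "(wt a (\<theta> s))^2 = cos a * cos (\<theta> s) + sin a * sin (\<theta> s)" .
    have "0 \<le> (g s - k * wt a (\<theta> s))^2" by simp
    then show ?thesis unfolding lhs_def w2[symmetric] by (simp add: power2_eq_square algebra_simps)
  qed
  have "integral {0..L} lhs \<le> integral {0..L} (\<lambda>s. (g s)^2)"
    by (rule integral_le[OF lhsi g2i pw])
  moreover have "(LINT s:{0..L}|lborel. (g s)^2) = integral {0..L} (\<lambda>s. (g s)^2)"
    using set_borel_integral_eq_integral(2)[OF si2] .
  ultimately show ?thesis unfolding energy_def using lhsv2 by (simp add: k_def)
qed

end

theorem theorem2p1:
  fixes \<alpha> :: real
  assumes "0 < \<alpha>" and "\<alpha> < pi / 2"
  shows "\<exists>L \<theta> g. L > 0 \<and> admissible \<alpha> L \<theta> g \<and>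
           (\<forall>L' \<theta>' g'. L' > 0 \<longrightarrow> admissible \<alpha> L' \<theta>' g' \<longrightarrow> energy L g \<le> energy L' g')"
proof (intro exI conjI allI impI)
  show "0 < Lc \<alpha>" by (rule L_pos[OF assms])
  show "admissible \<alpha> (Lc \<alpha>) (Tf \<alpha>) (g0 \<alpha>)" by (rule min_admissible[OF assms])
  fix L' \<theta>' g' assume h: "0 < L'" "admissible \<alpha> L' \<theta>' g'"
  show "energy (Lc \<alpha>) (g0 \<alpha>) \<le> energy L' g'"
    using lower_bound[OF assms h] min_energy[OF assms] by linarith
qed


end
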